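(* Let $\mu$ be a finite positive Borel measure on $\mathbb{R}^d$, $H$ an open set, $0<\tau\le1$, and $\mathcal{D}_1,\mathcal{D}_2$ two dyadic lattices with transit cubes $\mathcal{D}_1^{tr},\mathcal{D}_2^{tr}$. For each $R\in\mathcal{D}_2$ let $R_1$ be a designated one of its $2^d$ dyadic children (chosen by a fixed rule). For $Q\in\mathcal{D}_1^{tr}$, $R\in\mathcal{D}_2^{tr}$ with $Q\subset R_1$ put $T_{Q,R}=\big[\frac{\ell(Q)}{\ell(R)}\big]^{\tau/2}\sqrt{\frac{\mu(Q)}{\mu(R_1)}}$. Then for any nonnegative families $\{a_Q\}_{Q\in\mathcal{D}_1^{tr}}$, $\{b_R\}_{R\in\mathcal{D}_2^{tr}}$, $$\sum_{Q,R:\,Q\subset R_1}T_{Q,R}a_Qb_R\le\frac{1}{1-2^{-\tau/2}}\Big[\sum_Qa_Q^2\Big]^{1/2}\Big[\sum_Rb_R^2\Big]^{1/2}.$$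
   Context: A dyadic lattice is the collection of dyadic subcubes of a (shifted) unit cube. A dyadic cube $Q$ is terminal if $2Q\subset H$ or $\mu(Q)=0$, and transit otherwise (so $\mu(R_1)\ge\mu(Q)>0$ for transit $Q\subset R_1$). $\ell(\cdot)$ is side length. *)

theory Defs
  imports "HOL-Analysis.Analysis"
begin

definition hcube :: "real^'n \<Rightarrow> real \<Rightarrow> (real^'n) set" where
  "hcube c l = {x. \<forall>i. c$i \<le> x$i \<and> x$i < c$i + l}"

definition dyadic_lattice :: "real^'n \<Rightarrow> (real^'n) set set" where
  "dyadic_lattice z = {hcube (z + (2 powr - real k) *\<^sub>R (\<chi> i. real_of_int (j$i))) (2 powr - real k)
       | k j. \<forall>i. 0 \<le> j$i \<and> j$i < 2 ^ k}"

definition side_len :: "(real^'n) set \<Rightarrow> real" where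
  "side_len Q = (THE l. \<exists>c. 0 < l \<and> Q = hcube c l)"

definition double_cube :: "(real^'n) set \<Rightarrow> (real^'n) set" where
  "double_cube Q = (THE P. \<exists>c l. 0 < l \<and> Q = hcube c l \<and> P = hcube (c - (l/2) *\<^sub>R (\<chi> i. 1)) (2*l))"

definition dyadic_children :: "(real^'n) set \<Rightarrow> (real^'n) set set" where
  "dyadic_children R = {Q. \<exists>c l e. 0 < l \<and> R = hcube c l \<and> (\<forall>i. e$i \<in> {0::real,1})
        \<and> Q = hcube (c + (l/2) *\<^sub>R e) (l/2)}"

definition transit_cubes :: "(real^'n) measure \<Rightarrow> (real^'n) set \<Rightarrow> (real^'n) set set \<Rightarrow> (real^'n) set set" where
  "transit_cubes \<mu> H D = {Q \<in> D. \<not> (double_cube Q \<subseteq> H \<or> measure \<mu> Q = 0)}"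

definition ennsqrt :: "ennreal \<Rightarrow> ennreal" where
  "ennsqrt x = (if x = \<infinity> then \<infinity> else ennreal (sqrt (enn2real x)))"

end

theory Submission
  imports Defs
begin


lemma hcube_nonempty: "0 < l \<Longrightarrow> c \<in> hcube c l"
  by (simp add: hcube_def)

lemma hcube_subset_le:
  fixes c c' :: "real^'n"
  assumes "0 < l" "0 < l'" "hcube c l \<subseteq> hcube c' l'"
  shows "l \<le> l'"
proof -
  fix i :: 'n
  have "c' $ i \<le> c $ i \<and> c $ i < c' $ i + l'" using assms hcube_nonempty[of l c] by (auto simp: hcube_def)
  have "c $ i + t < c' $ i + l'" if "0 \<le> t" "t < l" for t
  proof -
    have "c + t *\<^sub>R (\<chi> i. 1) \<in> hcube c l" using that by (simp add: hcube_def)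
    hence "c + t *\<^sub>R (\<chi> i. 1) \<in> hcube c' l'" using assms(3) by blast
    then show ?thesis by (simp add: hcube_def)
  qed
  note h = this
  show ?thesis
  proof (rule ccontr)
    assume "\<not> l \<le> l'"
    then show False using h[of "c' $ i + l' - c $ i"] \<open>c' $ i \<le> c $ i \<and> c $ i < c' $ i + l'\<close> assms(2) by linarith
  qed
qed

lemma side_len_hcube: "0 < l \<Longrightarrow> side_len (hcube c l) = l"
  unfolding side_len_def
  apply (rule the_equality)
   apply blast
  by (metis dual_order.antisym hcube_subset_le order_refl)

lemma hcube_borel: "hcube c l \<in> sets borel"
  unfolding hcube_def by measurable

lemma lattice_elim:
  assumes "Q \<in> dyadic_lattice z"
  obtains k j where "Q = hcube (z + (2 powr - real k) *\<^sub>R (\<chi> i. real_of_int (j$i))) (2 powr - real k)"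
  using assms unfolding dyadic_lattice_def by blast

lemma lattice_hcube:
  assumes "Q \<in> dyadic_lattice z"
  obtains c l where "0 < l" "Q = hcube c l"
proof -
  obtain k j where "Q = hcube (z + (2 powr - real k) *\<^sub>R (\<chi> i. real_of_int (j$i))) (2 powr - real k)"
    using assms lattice_elim by blast
  then show ?thesis using that[of "2 powr - real k"] by simp
qed

lemma lattice_nonempty: "Q \<in> dyadic_lattice z \<Longrightarrow> Q \<noteq> {}"
  using hcube_nonempty lattice_hcube by blast

lemma lattice_borel: "Q \<in> dyadic_lattice z \<Longrightarrow> Q \<in> sets borel"
  using hcube_borel lattice_hcube by blast

definition lev :: "(real^'n) set \<Rightarrow> nat" where
  "lev Q = (SOME k. side_len Q = 2 powr - real k)"

lemma lev: "Q \<in> dyadic_lattice z \<Longrightarrow> side_len Q = 2 powr - real (lev Q)"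
  unfolding lev_def
proof (rule someI_ex)
  assume "Q \<in> dyadic_lattice z"
  then obtain k j where "Q = hcube (z + (2 powr - real k) *\<^sub>R (\<chi> i. real_of_int (j$i))) (2 powr - real k)"
    using lattice_elim by blast
  then have "side_len Q = 2 powr - real k" using side_len_hcube[of "2 powr - real k"] by simp
  then show "\<exists>k. side_len Q = 2 powr - real k" by blast
qed

lemma lattice_same:
  fixes z :: "real^'n"
  assumes "Q \<in> dyadic_lattice z" "Q' \<in> dyadic_lattice z" "lev Q = lev Q'" "x \<in> Q" "x \<in> Q'"
  shows "Q = Q'"
proof -
  obtain k j where Q: "Q = hcube (z + (2 powr - real k) *\<^sub>R (\<chi> i. real_of_int (j$i))) (2 powr - real k)"
    using assms(1) lattice_elim by blast
  obtain k' j' where Q': "Q' = hcube (z + (2 powr - real k') *\<^sub>R (\<chi> i. real_of_int (j'$i))) (2 powr - real k')"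
    using assms(2) lattice_elim by blast
  have "side_len Q = side_len Q'" using assms(3) lev[OF assms(1)] lev[OF assms(2)] by simp
  moreover have "side_len Q = 2 powr - real k" using Q side_len_hcube[of "2 powr - real k"] by simp
  moreover have "side_len Q' = 2 powr - real k'" using Q' side_len_hcube[of "2 powr - real k'"] by simp
  ultimately have "(2::real) powr - real k = 2 powr - real k'" by simp
  hence kk: "k' = k" by (simp add: powr_inj)
  define s where "s = (2::real) powr - real k"
  have s: "0 < s" by (simp add: s_def)
  have "j $ i = j' $ i" for i
  proof -
    have "z$i + s * j$i \<le> x$i \<and> x$i < z$i + s * j$i + s"
      using assms(4) Q unfolding hcube_def s_def by auto
    hence a: "j$i \<le> (x$i - z$i)/s \<and> (x$i - z$i)/s < j$i + 1" using s by (simp add: field_simps)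
    have "z$i + s * j'$i \<le> x$i \<and> x$i < z$i + s * j'$i + s"
      using assms(5) Q' kk unfolding hcube_def s_def by auto
    hence b: "j'$i \<le> (x$i - z$i)/s \<and> (x$i - z$i)/s < j'$i + 1" using s by (simp add: field_simps)
    show ?thesis using floor_unique[of "j$i" "(x$i - z$i)/s"] floor_unique[of "j'$i" "(x$i - z$i)/s"] a b by simp
  qed
  hence "j = j'" by (simp add: vec_eq_iff)
  thus ?thesis using Q Q' kk by simp
qed

lemma child_props:
  assumes "C \<in> dyadic_children R"
  shows "C \<subseteq> R" "side_len C = side_len R / 2" "\<exists>c l. 0 < l \<and> C = hcube c l"
proof -
  obtain c l e where h: "0 < l" "R = hcube c l" "\<forall>i. e$i \<in> {0::real,1}"
    "C = hcube (c + (l/2) *\<^sub>R e) (l/2)"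
    using assms unfolding dyadic_children_def by blast
  show "C \<subseteq> R"
  proof
    fix x assume "x \<in> C"
    have "c$i \<le> x$i \<and> x$i < c$i + l" for i
    proof -
      have "c$i + l/2 * e$i \<le> x$i \<and> x$i < c$i + l/2 * e$i + l/2"
        using \<open>x \<in> C\<close> h(4) unfolding hcube_def by auto
      moreover have "e$i = 0 \<or> e$i = 1" using h(3) by auto
      ultimately show ?thesis using h(1) by auto
    qed
    then show "x \<in> R" using h(2) unfolding hcube_def by auto
  qed
  have "side_len R = l" using h(1,2) side_len_hcube by blast
  moreover have "side_len C = l/2" using h(1,4) side_len_hcube[of "l/2"] by simp
  ultimately show "side_len C = side_len R / 2" by simp
  show "\<exists>c l. 0 < l \<and> C = hcube c l" using h by (intro exI[of _ "c + (l/2) *\<^sub>R e"] exI[of _ "l/2"]) simp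
qed

lemma lev_child:
  assumes "Q \<in> dyadic_lattice z1" "R \<in> dyadic_lattice z2" "C \<in> dyadic_children R" "Q \<subseteq> C"
  shows "lev R + 1 \<le> lev Q"
proof -
  obtain c l where cl: "0 < l" "Q = hcube c l" using assms(1) lattice_hcube by blast
  obtain c' l' where cl': "0 < l'" "C = hcube c' l'" using child_props(3)[OF assms(3)] by blast
  have "side_len Q \<le> side_len C" using cl cl' assms(4) hcube_subset_le side_len_hcube by metis
  hence "(2::real) powr - real (lev Q) \<le> 2 powr - real (lev R) / 2"
    using lev[OF assms(1)] lev[OF assms(2)] child_props(2)[OF assms(3)] by simp
  also have "\<dots> = 2 powr (- real (lev R + 1))" by (simp add: powr_diff powr_minus divide_simps)
  finally show ?thesis by simp
qed


lemma amgm_pt: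
  fixes w m a b t :: real
  assumes "0 \<le> w" "0 \<le> m" "0 < t"
  shows "w * sqrt m * a * b \<le> w * (t * a^2 + m * b^2 / t) / 2"
proof -
  have "0 \<le> (t * a - sqrt m * b)^2" by simp
  hence "2 * t * (sqrt m * a * b) \<le> t^2 * a^2 + m * b^2"
    using assms(2) by (simp add: power2_eq_square algebra_simps)
  hence "2 * (sqrt m * a * b) \<le> t * a^2 + m * b^2 / t"
    using assms(3) by (simp add: field_simps power2_eq_square)
  hence "sqrt m * a * b \<le> (t * a^2 + m * b^2 / t) / 2" by simp
  from mult_left_mono[OF this assms(1)] show ?thesis by (simp add: algebra_simps)
qed

lemma schur_core:
  fixes A :: "'a set" and B :: "'b set" and rel :: "'a \<Rightarrow> 'b \<Rightarrow> bool"
    and w m :: "'a \<Rightarrow> 'b \<Rightarrow> real" and a :: "'a \<Rightarrow> real" and b :: "'b \<Rightarrow> real" and C :: real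
  assumes fin: "finite A" "finite B"
   and an: "\<And>Q. Q\<in>A \<Longrightarrow> 0 \<le> a Q" and bn: "\<And>R. R\<in>B \<Longrightarrow> 0 \<le> b R"
   and wm: "\<And>Q R. Q\<in>A \<Longrightarrow> R\<in>B \<Longrightarrow> rel Q R \<Longrightarrow> 0 \<le> w Q R \<and> 0 \<le> m Q R"
   and h1: "\<And>Q. Q\<in>A \<Longrightarrow> (\<Sum>R\<in>{R\<in>B. rel Q R}. w Q R) \<le> C"
   and h2: "\<And>R. R\<in>B \<Longrightarrow> (\<Sum>Q\<in>{Q\<in>A. rel Q R}. w Q R * m Q R) \<le> C"
  shows "(\<Sum>Q\<in>A. \<Sum>R\<in>{R\<in>B. rel Q R}. w Q R * sqrt (m Q R) * a Q * b R)
     \<le> C * sqrt (\<Sum>Q\<in>A. (a Q)^2) * sqrt (\<Sum>R\<in>B. (b R)^2)"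
proof -
  define SA where "SA = (\<Sum>Q\<in>A. (a Q)^2)"
  define SB where "SB = (\<Sum>R\<in>B. (b R)^2)"
  have SA0: "0 \<le> SA" unfolding SA_def by (simp add: sum_nonneg)
  have SB0: "0 \<le> SB" unfolding SB_def by (simp add: sum_nonneg)
  show ?thesis
  proof (cases "SA = 0 \<or> SB = 0")
    case True
    then show ?thesis
    proof
      assume "SA = 0"
      hence "\<forall>Q\<in>A. (a Q)^2 = 0" unfolding SA_def using fin(1) by (subst (asm) sum_nonneg_eq_0_iff) auto
      hence "\<forall>Q\<in>A. a Q = 0" by simp
      thus ?thesis using \<open>SA = 0\<close> unfolding SA_def by simp
    next
      assume "SB = 0"
      hence "\<forall>R\<in>B. (b R)^2 = 0" unfolding SB_def using fin(2) by (subst (asm) sum_nonneg_eq_0_iff) auto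
      hence "\<forall>R\<in>B. b R = 0" by simp
      thus ?thesis using \<open>SB = 0\<close> unfolding SB_def by simp
    qed
  next
    case False
    hence SAp: "0 < SA" and SBp: "0 < SB" using SA0 SB0 by auto
    define t where "t = sqrt SB / sqrt SA"
    have tp: "0 < t" unfolding t_def using SAp SBp by simp
    have "(\<Sum>Q\<in>A. \<Sum>R\<in>{R\<in>B. rel Q R}. w Q R * sqrt (m Q R) * a Q * b R)
        \<le> (\<Sum>Q\<in>A. \<Sum>R\<in>{R\<in>B. rel Q R}. w Q R * (t * (a Q)^2 + m Q R * (b R)^2 / t) / 2)"
      by (intro sum_mono) (use wm amgm_pt tp in auto)
    also have "\<dots> = (\<Sum>Q\<in>A. (\<Sum>R\<in>{R\<in>B. rel Q R}. (t * (a Q)^2 / 2) * w Q R)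
        + (\<Sum>R\<in>{R\<in>B. rel Q R}. w Q R * m Q R * (b R)^2 / (2*t)))"
      by (rule sum.cong[OF refl], simp only: sum.distrib[symmetric], rule sum.cong[OF refl])
         (simp add: algebra_simps add_divide_distrib)
    also have "\<dots> = (\<Sum>Q\<in>A. (t * (a Q)^2 / 2) * (\<Sum>R\<in>{R\<in>B. rel Q R}. w Q R))
        + (\<Sum>Q\<in>A. \<Sum>R\<in>{R\<in>B. rel Q R}. w Q R * m Q R * (b R)^2 / (2*t))"
      by (simp add: sum.distrib sum_distrib_left)
    also have "(\<Sum>Q\<in>A. \<Sum>R\<in>{R\<in>B. rel Q R}. w Q R * m Q R * (b R)^2 / (2*t))
        = (\<Sum>R\<in>B. \<Sum>Q\<in>{Q\<in>A. rel Q R}. w Q R * m Q R * (b R)^2 / (2*t))"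
      using fin by (simp add: sum.inter_filter sum.swap[of _ A B])
    also have "\<dots> = (\<Sum>R\<in>B. ((b R)^2 / (2*t)) * (\<Sum>Q\<in>{Q\<in>A. rel Q R}. w Q R * m Q R))"
      by (simp add: sum_distrib_left algebra_simps)
    also have "\<dots> \<le> (\<Sum>R\<in>B. ((b R)^2 / (2*t)) * C)"
      by (intro sum_mono mult_left_mono h2) (use tp in auto)
    also have "(\<Sum>Q\<in>A. (t * (a Q)^2 / 2) * (\<Sum>R\<in>{R\<in>B. rel Q R}. w Q R)) \<le> (\<Sum>Q\<in>A. (t * (a Q)^2 / 2) * C)"
      by (intro sum_mono mult_left_mono h1) (use tp in auto)
    also have "(\<Sum>Q\<in>A. (t * (a Q)^2 / 2) * C) + (\<Sum>R\<in>B. ((b R)^2 / (2*t)) * C)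
       = C * (t * SA / 2 + SB / (2 * t))"
      unfolding SA_def SB_def by (simp add: sum_distrib_left sum_divide_distrib algebra_simps)
    also have "C * (t * SA / 2 + SB / (2 * t)) = C * sqrt SA * sqrt SB"
    proof -
      have e1: "t * SA = sqrt SA * sqrt SB"
        unfolding t_def using SAp by (simp add: field_simps)
      have e2: "SB / t = sqrt SA * sqrt SB"
        unfolding t_def using SAp SBp by (simp add: field_simps)
      have "t * SA / 2 + SB / (2 * t) = sqrt SA * sqrt SB"
        using e1 e2 by (simp add: field_simps)
      thus ?thesis by simp
    qed
    finally show ?thesis unfolding SA_def SB_def by simp
  qed
qed

lemma geom_bound:
  fixes r :: real
  assumes "0 \<le> r" "r < 1" "finite K"
  shows "(\<Sum>i\<in>K. r ^ i) \<le> 1 / (1 - r)"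
proof -
  obtain N where N: "K \<subseteq> {..<N}"
    using assms(3) by (meson finite_nat_iff_bounded)
  have "(\<Sum>i\<in>K. r ^ i) \<le> (\<Sum>i<N. r ^ i)"
    by (rule sum_mono2) (use N assms in auto)
  also have "\<dots> = (1 - r ^ N) / (1 - r)" using sum_gp_strict[of r N] assms by simp
  also have "\<dots> \<le> 1 / (1 - r)" using assms by (simp add: divide_right_mono)
  finally show ?thesis .
qed

lemma powr_ratio:
  fixes \<tau> :: real
  assumes "k \<le> m"
  shows "((2::real) powr - real m / 2 powr - real k) powr (\<tau>/2) = (2 powr (-\<tau>/2)) ^ (m - k)"
proof -
  have "(2::real) powr - real m / 2 powr - real k = 2 powr (- real (m - k))"
    using assms by (simp add: powr_diff[symmetric] of_nat_diff)
  hence "((2::real) powr - real m / 2 powr - real k) powr (\<tau>/2) = 2 powr (- real (m - k) * (\<tau>/2))"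
    by (simp add: powr_powr)
  also have "\<dots> = (2 powr (-\<tau>/2)) powr real (m - k)"
    by (simp add: powr_powr algebra_simps)
  also have "\<dots> = (2 powr (-\<tau>/2)) ^ (m - k)"
    by (simp add: powr_realpow)
  finally show ?thesis .
qed

lemma ennsqrt_bound:
  fixes f :: "'a \<Rightarrow> real"
  assumes "finite A" "A \<subseteq> D"
  shows "ennreal (sqrt (\<Sum>Q\<in>A. (f Q)^2)) \<le> ennsqrt (\<Sum>\<^sub>\<infinity>Q\<in>D. ennreal ((f Q)^2))"
proof (cases "(\<Sum>\<^sub>\<infinity>Q\<in>D. ennreal ((f Q)^2)) = \<infinity>")
  case True
  then show ?thesis by (simp add: ennsqrt_def)
next
  case False
  define X where "X = (\<Sum>\<^sub>\<infinity>Q\<in>D. ennreal ((f Q)^2))"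
  have "ennreal (\<Sum>Q\<in>A. (f Q)^2) = (\<Sum>Q\<in>A. ennreal ((f Q)^2))"
    by (simp add: sum_ennreal)
  also have "\<dots> = (\<Sum>\<^sub>\<infinity>Q\<in>A. ennreal ((f Q)^2))" using assms(1) by simp
  also have "\<dots> \<le> X" unfolding X_def
    by (rule infsum_mono_neutral) (use assms in \<open>auto intro: nonneg_summable_on_complete\<close>)
  finally have le: "ennreal (\<Sum>Q\<in>A. (f Q)^2) \<le> X" .
  have Xf: "X \<noteq> \<infinity>" using False X_def by simp
  hence "X = ennreal (enn2real X)" by (simp add: ennreal_enn2real_if)
  hence "(\<Sum>Q\<in>A. (f Q)^2) \<le> enn2real X" using le
    by (metis enn2real_nonneg ennreal_le_iff)
  hence "sqrt (\<Sum>Q\<in>A. (f Q)^2) \<le> sqrt (enn2real X)" by simp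
  thus ?thesis using Xf unfolding X_def[symmetric] ennsqrt_def by (simp add: ennreal_leI)
qed

lemma r_props:
  fixes \<tau> :: real
  assumes "0 < \<tau>"
  shows "0 < (2::real) powr (-\<tau>/2)" "(2::real) powr (-\<tau>/2) < 1"
  using assms by (auto intro: powr_less_one)

lemma h1_bound:
  fixes z1 z2 :: "real^'n"
  assumes child: "\<And>R. R \<in> dyadic_lattice z2 \<Longrightarrow> child R \<in> dyadic_children R"
    and Q: "Q \<in> dyadic_lattice z1" and B: "finite B" "B \<subseteq> dyadic_lattice z2"
    and tau: "0 < \<tau>"
  shows "(\<Sum>R\<in>{R\<in>B. Q \<subseteq> child R}. (side_len Q / side_len R) powr (\<tau>/2)) \<le> 1/(1 - 2 powr (-\<tau>/2))"
proof -
  define S where "S = {R\<in>B. Q \<subseteq> child R}"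
  define r :: real where "r = 2 powr (-\<tau>/2)"
  define f where "f R = lev Q - lev R" for R :: "(real^'n) set"
  have SB: "S \<subseteq> dyadic_lattice z2" using B(2) S_def by auto
  have levle: "lev R + 1 \<le> lev Q" if "R \<in> S" for R
    using lev_child[OF Q _ child] that SB S_def by auto
  have trm: "(side_len Q / side_len R) powr (\<tau>/2) = r ^ f R" if "R \<in> S" for R
    using powr_ratio[of "lev R" "lev Q" \<tau>] levle[OF that] lev[OF Q] lev[of R z2] that SB
    unfolding r_def f_def by auto
  obtain x where x: "x \<in> Q" using lattice_nonempty[OF Q] by blast
  have inj: "inj_on f S"
  proof (rule inj_onI)
    fix R R' assume RR: "R \<in> S" "R' \<in> S" "f R = f R'"
    hence "lev R = lev R'" using levle unfolding f_def by fastforce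
    moreover have "x \<in> R" "x \<in> R'" using RR x child_props(1)[OF child] SB S_def by blast+
    ultimately show "R = R'" using lattice_same[of R z2 R' x] RR SB by blast
  qed
  have "(\<Sum>R\<in>{R\<in>B. Q \<subseteq> child R}. (side_len Q / side_len R) powr (\<tau>/2)) = (\<Sum>R\<in>S. r ^ f R)"
    unfolding S_def[symmetric] using trm by simp
  also have "\<dots> = (\<Sum>i\<in>f ` S. r ^ i)" using sum.reindex[OF inj, of "\<lambda>i. r ^ i"] by simp
  also have "\<dots> \<le> 1 / (1 - r)"
    by (rule geom_bound) (use r_props[OF tau] B S_def in \<open>auto simp: r_def\<close>)
  finally show ?thesis unfolding r_def .
qed

lemma h2_bound:
  fixes z1 z2 :: "real^'n" and \<mu> :: "(real^'n) measure"
  assumes fm: "finite_measure \<mu>" "sets \<mu> = sets borel"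
    and child: "\<And>R. R \<in> dyadic_lattice z2 \<Longrightarrow> child R \<in> dyadic_children R"
    and R: "R \<in> dyadic_lattice z2" and A: "finite A" "A \<subseteq> dyadic_lattice z1"
    and tau: "0 < \<tau>"
  shows "(\<Sum>Q\<in>{Q\<in>A. Q \<subseteq> child R}. (side_len Q / side_len R) powr (\<tau>/2)
            * (measure \<mu> Q / measure \<mu> (child R))) \<le> 1/(1 - 2 powr (-\<tau>/2))"
proof -
  define S where "S = {Q\<in>A. Q \<subseteq> child R}"
  define r :: real where "r = 2 powr (-\<tau>/2)"
  define g where "g Q = lev Q - lev R" for Q :: "(real^'n) set"
  define h where "h Q = (side_len Q / side_len R) powr (\<tau>/2) * (measure \<mu> Q / measure \<mu> (child R))"
    for Q :: "(real^'n) set"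
  have SA: "S \<subseteq> dyadic_lattice z1" using A(2) S_def by auto
  have fS: "finite S" using A(1) S_def by simp
  have rp: "0 < r" "r < 1" using r_props[OF tau] r_def by auto
  have levle: "lev R + 1 \<le> lev Q" if "Q \<in> S" for Q
    using lev_child[OF _ R child[OF R]] that SA S_def by auto
  have trm: "h Q = r ^ g Q * (measure \<mu> Q / measure \<mu> (child R))" if "Q \<in> S" for Q
    using powr_ratio[of "lev R" "lev Q" \<tau>] levle[OF that] lev[OF R] lev[of Q z1] that SA
    unfolding r_def g_def h_def by auto
  have cR: "child R \<in> sets \<mu>" using child_props(3)[OF child[OF R]] hcube_borel fm(2) by auto
  have inner: "(\<Sum>Q\<in>{Q. Q \<in> S \<and> g Q = i}. h Q) \<le> r ^ i" for i
  proof -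
    define Si where "Si = {Q. Q \<in> S \<and> g Q = i}"
    have fSi: "finite Si" using fS Si_def by simp
    have disj: "disjoint_family_on (\<lambda>Q. Q) Si"
      unfolding disjoint_family_on_def
    proof (intro ballI impI)
      fix Q Q' assume QQ: "Q \<in> Si" "Q' \<in> Si" "Q \<noteq> Q'"
      hence "lev Q = lev Q'" using levle unfolding Si_def g_def by fastforce
      show "Q \<inter> Q' = {}"
      proof (rule ccontr)
        assume "Q \<inter> Q' \<noteq> {}"
        then obtain x where "x \<in> Q" "x \<in> Q'" by blast
        hence "Q = Q'" using lattice_same[of Q z1 Q' x] QQ SA \<open>lev Q = lev Q'\<close> Si_def by blast
        thus False using QQ by simp
      qed
    qed
    have sets: "(\<lambda>Q. Q) ` Si \<subseteq> sets \<mu>" using SA lattice_borel fm(2) Si_def by auto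
    have "(\<Sum>Q\<in>Si. measure \<mu> Q) = measure \<mu> (\<Union>Q\<in>Si. Q)"
      using measure_finite_Union[OF fSi sets disj] finite_measure.emeasure_finite[OF fm(1)] by simp
    also have "\<dots> \<le> measure \<mu> (child R)"
      by (rule finite_measure.finite_measure_mono[OF fm(1) _ cR]) (use Si_def S_def in auto)
    finally have le: "(\<Sum>Q\<in>Si. measure \<mu> Q) \<le> measure \<mu> (child R)" .
    have "(\<Sum>Q\<in>Si. h Q) = (\<Sum>Q\<in>Si. r ^ i * (measure \<mu> Q / measure \<mu> (child R)))"
      using trm Si_def by auto
    also have "\<dots> = r ^ i * ((\<Sum>Q\<in>Si. measure \<mu> Q) / measure \<mu> (child R))"
      by (simp add: sum_distrib_left sum_divide_distrib)
    also have "\<dots> \<le> r ^ i * 1"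
    proof (rule mult_left_mono)
      show "(\<Sum>Q\<in>Si. measure \<mu> Q) / measure \<mu> (child R) \<le> 1"
      proof (cases "measure \<mu> (child R) = 0")
        case True then show ?thesis by simp
      next
        case False
        hence "0 < measure \<mu> (child R)" using measure_nonneg[of \<mu> "child R"] by linarith
        then show ?thesis using le by simp
      qed
    qed (use rp in simp)
    finally show ?thesis unfolding Si_def by simp
  qed
  have "(\<Sum>Q\<in>{Q\<in>A. Q \<subseteq> child R}. (side_len Q / side_len R) powr (\<tau>/2)
            * (measure \<mu> Q / measure \<mu> (child R))) = (\<Sum>Q\<in>S. h Q)"
    unfolding S_def h_def by simp
  also have "\<dots> = (\<Sum>i\<in>g ` S. \<Sum>Q\<in>{Q. Q \<in> S \<and> g Q = i}. h Q)"
    using sum.group[OF fS _ order_refl, of g h] fS by simp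
  also have "\<dots> \<le> (\<Sum>i\<in>g ` S. r ^ i)" by (intro sum_mono inner)
  also have "\<dots> \<le> 1 / (1 - r)" by (rule geom_bound) (use rp fS in auto)
  finally show ?thesis unfolding r_def .
qed

theorem lemma24:
  fixes \<mu> :: "(real^'n) measure" and H :: "(real^'n) set" and \<tau> :: real
    and z1 z2 :: "real^'n" and child :: "(real^'n) set \<Rightarrow> (real^'n) set"
    and a b :: "(real^'n) set \<Rightarrow> real"
  assumes "finite_measure \<mu>" and "sets \<mu> = sets borel"
    and "open H"
    and "0 < \<tau>" and "\<tau> \<le> 1"
    and "\<And>R. R \<in> dyadic_lattice z2 \<Longrightarrow> child R \<in> dyadic_children R"
    and "\<And>Q. Q \<in> transit_cubes \<mu> H (dyadic_lattice z1) \<Longrightarrow> 0 \<le> a Q"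
    and "\<And>R. R \<in> transit_cubes \<mu> H (dyadic_lattice z2) \<Longrightarrow> 0 \<le> b R"
  shows "(\<Sum>\<^sub>\<infinity>(Q,R)\<in>{(Q,R). Q \<in> transit_cubes \<mu> H (dyadic_lattice z1)
                 \<and> R \<in> transit_cubes \<mu> H (dyadic_lattice z2) \<and> Q \<subseteq> child R}.
            ennreal ((side_len Q / side_len R) powr (\<tau>/2) * sqrt (measure \<mu> Q / measure \<mu> (child R))
                     * a Q * b R))
         \<le> ennreal (1 / (1 - 2 powr (-\<tau>/2)))
            * ennsqrt (\<Sum>\<^sub>\<infinity>Q\<in>transit_cubes \<mu> H (dyadic_lattice z1). ennreal ((a Q)\<^sup>2))
            * ennsqrt (\<Sum>\<^sub>\<infinity>R\<in>transit_cubes \<mu> H (dyadic_lattice z2). ennreal ((b R)\<^sup>2))"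
proof -
  note fm = assms(1,2) and child = assms(6) and an = assms(7) and bn = assms(8)
  define D1 where "D1 = transit_cubes \<mu> H (dyadic_lattice z1)"
  define D2 where "D2 = transit_cubes \<mu> H (dyadic_lattice z2)"
  define C :: real where "C = 1 / (1 - 2 powr (-\<tau>/2))"
  define w where "w Q R = (side_len Q / side_len R) powr (\<tau>/2)" for Q R :: "(real^'n) set"
  define m where "m Q R = measure \<mu> Q / measure \<mu> (child R)" for Q R :: "(real^'n) set"
  define g where "g Q R = w Q R * sqrt (m Q R) * a Q * b R" for Q R
  define P where "P = {(Q,R). Q \<in> D1 \<and> R \<in> D2 \<and> Q \<subseteq> child R}"
  have D1L: "D1 \<subseteq> dyadic_lattice z1" unfolding D1_def transit_cubes_def by auto
  have D2L: "D2 \<subseteq> dyadic_lattice z2" unfolding D2_def transit_cubes_def by auto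
  have Cp: "0 \<le> C" using r_props[OF assms(4)] unfolding C_def by simp
  have gnn: "0 \<le> g Q R" if "Q \<in> D1" "R \<in> D2" for Q R
    using an[of Q] bn[of R] that unfolding g_def w_def m_def D1_def D2_def by simp
  have "(\<Sum>\<^sub>\<infinity>(Q,R)\<in>P. ennreal (g Q R))
      \<le> ennreal C * ennsqrt (\<Sum>\<^sub>\<infinity>Q\<in>D1. ennreal ((a Q)\<^sup>2)) * ennsqrt (\<Sum>\<^sub>\<infinity>R\<in>D2. ennreal ((b R)\<^sup>2))"
  proof (rule infsum_le_finite_sums)
    show "(\<lambda>(Q,R). ennreal (g Q R)) summable_on P" by (rule nonneg_summable_on_complete) auto
  next
    fix F assume F: "finite F" "F \<subseteq> P"
    define A where "A = fst ` F"
    define B where "B = snd ` F"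
    have fA: "finite A" "A \<subseteq> D1" using F unfolding A_def P_def by auto
    have fB: "finite B" "B \<subseteq> D2" using F unfolding B_def P_def by auto
    define SG where "SG = Sigma A (\<lambda>Q. {R\<in>B. Q \<subseteq> child R})"
    have FS: "F \<subseteq> SG" using F unfolding SG_def A_def B_def P_def by force
    have fSG: "finite SG" using fA fB unfolding SG_def by simp
    have "sum (\<lambda>(Q,R). ennreal (g Q R)) F \<le> sum (\<lambda>(Q,R). ennreal (g Q R)) SG"
      by (rule sum_mono2[OF fSG FS]) auto
    also have "\<dots> = (\<Sum>Q\<in>A. \<Sum>R\<in>{R\<in>B. Q \<subseteq> child R}. ennreal (g Q R))"
      unfolding SG_def using fA fB by (subst sum.Sigma) auto
    also have "\<dots> = (\<Sum>Q\<in>A. ennreal (\<Sum>R\<in>{R\<in>B. Q \<subseteq> child R}. g Q R))"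
      by (rule sum.cong[OF refl], rule sum_ennreal) (use gnn fA fB in auto)
    also have "\<dots> = ennreal (\<Sum>Q\<in>A. \<Sum>R\<in>{R\<in>B. Q \<subseteq> child R}. g Q R)"
      by (rule sum_ennreal) (use gnn fA fB in \<open>auto intro!: sum_nonneg\<close>)
    also have "\<dots> \<le> ennreal (C * sqrt (\<Sum>Q\<in>A. (a Q)^2) * sqrt (\<Sum>R\<in>B. (b R)^2))"
    proof (rule ennreal_leI)
      show "(\<Sum>Q\<in>A. \<Sum>R\<in>{R\<in>B. Q \<subseteq> child R}. g Q R) \<le> C * sqrt (\<Sum>Q\<in>A. (a Q)^2) * sqrt (\<Sum>R\<in>B. (b R)^2)"
        unfolding g_def
      proof (rule schur_core[where rel = "\<lambda>Q R. Q \<subseteq> child R"])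
        show "finite A" "finite B" by fact+
        show "\<And>Q. Q \<in> A \<Longrightarrow> 0 \<le> a Q" using an fA D1_def by auto
        show "\<And>R. R \<in> B \<Longrightarrow> 0 \<le> b R" using bn fB D2_def by auto
        show "\<And>Q R. Q \<in> A \<Longrightarrow> R \<in> B \<Longrightarrow> Q \<subseteq> child R \<Longrightarrow> 0 \<le> w Q R \<and> 0 \<le> m Q R"
          unfolding w_def m_def by simp
        show "\<And>Q. Q \<in> A \<Longrightarrow> (\<Sum>R\<in>{R\<in>B. Q \<subseteq> child R}. w Q R) \<le> C"
          unfolding w_def C_def using h1_bound[OF child _ fB(1) _ assms(4)] fA fB D1L D2L by blast
        show "\<And>R. R \<in> B \<Longrightarrow> (\<Sum>Q\<in>{Q\<in>A. Q \<subseteq> child R}. w Q R * m Q R) \<le> C"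
          unfolding w_def m_def C_def using h2_bound[OF fm child _ fA(1) _ assms(4)] fA fB D1L D2L by blast
      qed
    qed
    also have "\<dots> = ennreal C * ennreal (sqrt (\<Sum>Q\<in>A. (a Q)^2)) * ennreal (sqrt (\<Sum>R\<in>B. (b R)^2))"
    proof -
      have n1: "0 \<le> sqrt (\<Sum>Q\<in>A. (a Q)^2)" by (simp add: sum_nonneg)
      have n2: "0 \<le> sqrt (\<Sum>R\<in>B. (b R)^2)" by (simp add: sum_nonneg)
      show ?thesis using ennreal_mult[OF mult_nonneg_nonneg[OF Cp n1] n2] ennreal_mult[OF Cp n1] by simp
    qed
    also have "\<dots> \<le> ennreal C * ennsqrt (\<Sum>\<^sub>\<infinity>Q\<in>D1. ennreal ((a Q)\<^sup>2)) * ennsqrt (\<Sum>\<^sub>\<infinity>R\<in>D2. ennreal ((b R)\<^sup>2))"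
      by (intro mult_mono ennsqrt_bound fA fB order_refl) auto
    finally show "sum (\<lambda>(Q,R). ennreal (g Q R)) F
      \<le> ennreal C * ennsqrt (\<Sum>\<^sub>\<infinity>Q\<in>D1. ennreal ((a Q)\<^sup>2)) * ennsqrt (\<Sum>\<^sub>\<infinity>R\<in>D2. ennreal ((b R)\<^sup>2))" .
  qed
  then show ?thesis unfolding P_def D1_def D2_def C_def g_def w_def m_def by simp
qed

end
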